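(* Let $P\in N_1$ be a sum of $6$ monomials, not necessarily distinct (i.e. $P(1)=6$). If $P$ does not have unique factorisation inside $N_1$, then $P=X^a(1+X^b+X^{2b}+X^{3b}+X^{4b}+X^{5b})$ for some integers $a\ge0$ and $b\ge1$.
   Context: $N_1=\mathbb{Z}_{\ge0}[X]$ is the semiring of univariate polynomials with nonnegative integer coefficients. An element $Q\neq0,1$ of $N_1$ is irreducible if in every factorisation $Q=ST$ with $S,T\in N_1$ one of $S,T$ is $1$. $P$ has unique factorisation in $N_1$ if any two factorisations of $P$ into irreducibles of $N_1$ coincide up to order of the factors. *)

theory Defs
  imports "HOL-Computational_Algebra.Polynomial" "HOL-Library.Multiset"
begin

text \<open>N_1 = Z_{>=0}[X] is rendered as the type nat poly.\<close>

definition N1_irreducible :: "nat poly \<Rightarrow> bool" where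
  "N1_irreducible Q \<longleftrightarrow> Q \<noteq> 0 \<and> Q \<noteq> 1 \<and>
     (\<forall>S T. Q = S * T \<longrightarrow> S = 1 \<or> T = 1)"

definition N1_factorisation :: "nat poly multiset \<Rightarrow> nat poly \<Rightarrow> bool" where
  "N1_factorisation M P \<longleftrightarrow> (\<forall>Q\<in>#M. N1_irreducible Q) \<and> prod_mset M = P"

definition N1_unique_factorisation :: "nat poly \<Rightarrow> bool" where
  "N1_unique_factorisation P \<longleftrightarrow>
     (\<forall>M M'. N1_factorisation M P \<longrightarrow> N1_factorisation M' P \<longrightarrow> M = M')"

end

theory Submission
  imports Defs
begin


definition msp :: "nat poly \<Rightarrow> nat multiset" where "msp P = Abs_multiset (coeff P)"

definition mp :: "nat multiset \<Rightarrow> nat poly" where "mp M = (\<Sum>e\<in>#M. monom 1 e)"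

lemma count_msp: "count (msp P) = coeff P"
proof -
  have "finite {x. 0 < coeff P x}"
    by (rule finite_subset[of _ "{..degree P}"]) (auto intro: le_degree)
  then show ?thesis unfolding msp_def by (simp add: count_Abs_multiset)
qed

lemma coeff_mp: "coeff (mp M) x = count M x"
  unfolding mp_def by (induction M) (auto simp: coeff_monom)

lemma poly_mp: "poly (mp M) 1 = size M"
  unfolding mp_def by (induction M) (auto simp: poly_monom)

lemma mp_msp: "mp (msp P) = P"
  by (rule poly_eqI) (simp add: coeff_mp count_msp)

lemma size_msp: "size (msp P) = poly P 1"
  by (metis mp_msp poly_mp)

lemma mp_simps: "mp {#} = 0" "mp (add_mset a M) = monom 1 a + mp M"
  unfolding mp_def by auto

lemma poly1_pos: "(P::nat poly) \<noteq> 0 \<Longrightarrow> poly P 1 \<ge> 1"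
  by (metis One_nat_def Suc_leI mp_msp mp_simps(1) neq0_conv size_eq_0_iff_empty size_msp)

lemma poly1_one: "poly (P::nat poly) 1 = 1 \<Longrightarrow> \<exists>j. P = monom 1 j"
  by (metis add_0_right mp_msp mp_simps size_1_singleton_mset size_msp)

lemma map_int_mult: "map_poly int (p * q) = map_poly int p * map_poly int q"
  by (rule poly_eqI) (simp add: coeff_mult coeff_map_poly)

lemma map_int_inj: "map_poly int p = map_poly int q \<Longrightarrow> p = q"
  by (metis (no_types, lifting) coeff_map_poly of_nat_0 of_nat_eq_iff poly_eqI)

lemma cancel_nat_poly: "(A::nat poly) \<noteq> 0 \<Longrightarrow> A * B = A * C \<Longrightarrow> B = C"
proof -
  assume a: "A \<noteq> 0" "A * B = A * C"
  have "map_poly int A \<noteq> 0" using a(1) map_int_inj by fastforce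
  moreover have "map_poly int A * map_poly int B = map_poly int A * map_poly int C"
    using a(2) by (metis map_int_mult)
  ultimately show ?thesis using map_int_inj by simp
qed



definition ind :: "nat \<Rightarrow> nat \<Rightarrow> nat" where "ind e x = (if e = x then 1 else 0)"

lemma comb:
  fixes k m p1 p2 q1 q2 :: nat
  assumes h: "\<And>x. ind 0 x + ind p1 x + ind p2 x + ind k x + ind (k+p1) x + ind (k+p2) x
     = ind 0 x + ind q1 x + ind q2 x + ind m x + ind (m+q1) x + ind (m+q2) x"
  and a: "k < m" "p1 \<le> p2" "q1 \<le> q2"
  shows "m = 3*k \<and> p1 = 2*k \<and> p2 = 4*k"
proof -
  have s1: "k+p2 = m+q2"
  proof (rule ccontr)
    assume "k + p2 \<noteq> m + q2"
    then consider "k+p2 < m+q2" | "m+q2 < k+p2" by linarith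
    then show False
    proof cases
      case 1 then show ?thesis using h[of "m+q2"] a by (auto simp: ind_def)
    next
      case 2 then show ?thesis using h[of "k+p2"] a by (auto simp: ind_def)
    qed
  qed
  have "0 < k"
  proof (rule ccontr)
    assume "\<not> 0 < k"
    then have k0: "k = 0" by simp
    have "q1 = q2" using h[of "m+q2"] a k0 s1 by (auto simp: ind_def split: if_splits)
    then show False using h[of m] a k0 s1 by (auto simp: ind_def split: if_splits)
  qed
  show ?thesis
  proof (cases "p1 \<le> k")
    case True
    have "q1 = p1"
    proof (rule ccontr)
      assume "q1 \<noteq> p1"
      then consider "q1 < p1" | "p1 < q1" by linarith
      then show False
      proof cases
        case 1 then show ?thesis using h[of q1] a True by (auto simp: ind_def)
      next
        case 2 then show ?thesis using h[of p1] a True by (auto simp: ind_def)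
      qed
    qed
    have "q2 = k" using h[of k] a True s1 \<open>q1 = p1\<close> by (auto simp: ind_def split: if_splits)
    then have "p2 = m" using s1 by simp
    have "p1 = k" using h[of "m+p1"] a True s1 \<open>q1 = p1\<close> \<open>q2 = k\<close> \<open>p2 = m\<close> by (auto simp: ind_def split: if_splits)
    show ?thesis using h[of "m+k"] a True s1 \<open>q1 = p1\<close> \<open>q2 = k\<close> \<open>p2 = m\<close> \<open>p1 = k\<close> by (auto simp: ind_def split: if_splits)
  next
    case False
    have "q1 = k"
    proof (rule ccontr)
      assume "q1 \<noteq> k"
      then consider "q1 < k" | "k < q1" by linarith
      then show False
      proof cases
        case 1 then show ?thesis using h[of q1] a False by (auto simp: ind_def)
      next
        case 2 then show ?thesis using h[of k] a False by (auto simp: ind_def)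
      qed
    qed
    have "q2 < p2" using s1 a by linarith
    have "p1 = q2 \<or> p1 = m"
    proof (rule ccontr)
      assume n: "\<not> (p1 = q2 \<or> p1 = m)"
      consider "p1 < q2" "p1 < m" | "q2 < p1" "q2 \<le> m" | "m < p1" "m \<le> q2" using n by linarith
      then show False
      proof cases
        case 1 then show ?thesis using h[of p1] a False s1 \<open>q1 = k\<close> by (auto simp: ind_def)
      next
        case 2 then show ?thesis using h[of q2] a False s1 \<open>q1 = k\<close> by (auto simp: ind_def)
      next
        case 3 then show ?thesis using h[of m] a False s1 \<open>q1 = k\<close> by (auto simp: ind_def)
      qed
    qed
    then show ?thesis
    proof
      assume "p1 = m"
      then show ?thesis using h[of p2] a False s1 \<open>q1 = k\<close> \<open>q2 < p2\<close> \<open>0 < k\<close>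
        by (auto simp: ind_def add.commute split: if_splits)
    next
      assume "p1 = q2"
      have "m < p2" using s1 \<open>p1 = q2\<close> False by linarith
      have "m = k + p1" using h[of m] a False s1 \<open>q1 = k\<close> \<open>p1 = q2\<close> \<open>m < p2\<close> \<open>0 < k\<close>
        by (auto simp: ind_def split: if_splits)
      have "p1 = 2*k" using h[of "m+k"] a False s1 \<open>q1 = k\<close> \<open>p1 = q2\<close> \<open>m < p2\<close> \<open>0 < k\<close> \<open>m = k + p1\<close>
        by (auto simp: ind_def split: if_splits)
      then show ?thesis using \<open>m = k + p1\<close> s1 \<open>p1 = q2\<close> by linarith
    qed
  qed
qed

lemma sum6: "(\<Sum>i<6. monom (1::nat) (i * k)) = monom 1 0 + monom 1 k + monom 1 (2*k) + monom 1 (3*k) + monom 1 (4*k) + monom 1 (5*k)"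
  by (simp add: numeral_eq_Suc lessThan_Suc add_ac)

lemma prod6: "(monom 1 0 + monom 1 k) * (monom 1 0 + monom 1 p1 + monom 1 p2) =
   monom (1::nat) 0 + monom 1 p1 + monom 1 p2 + monom 1 k + monom 1 (k+p1) + monom 1 (k+p2)"
  by (simp add: distrib_left distrib_right mult_monom add_ac)

lemma coeff6: "coeff (monom (1::nat) 0 + monom 1 p1 + monom 1 p2 + monom 1 k + monom 1 (k+p1) + monom 1 (k+p2)) x
   = ind 0 x + ind p1 x + ind p2 x + ind k x + ind (k+p1) x + ind (k+p2) x"
  by (simp add: coeff_monom ind_def)

lemma key_lt:
  fixes k m p1 p2 q1 q2 :: nat
  assumes e: "(monom (1::nat) 0 + monom 1 k) * (monom 1 0 + monom 1 p1 + monom 1 p2)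
     = (monom 1 0 + monom 1 m) * (monom 1 0 + monom 1 q1 + monom 1 q2)"
  and a: "k < m" "p1 \<le> p2" "q1 \<le> q2"
  shows "\<exists>b\<ge>1. (monom (1::nat) 0 + monom 1 k) * (monom 1 0 + monom 1 p1 + monom 1 p2) = (\<Sum>i<6. monom 1 (i * b))"
proof -
  have h: "\<And>x. ind 0 x + ind p1 x + ind p2 x + ind k x + ind (k+p1) x + ind (k+p2) x
     = ind 0 x + ind q1 x + ind q2 x + ind m x + ind (m+q1) x + ind (m+q2) x"
    using arg_cong[OF e, of "\<lambda>p. coeff p x" for x] unfolding prod6 coeff6 .
  from comb[OF h a] have c: "m = 3*k" "p1 = 2*k" "p2 = 4*k" by auto
  have "k \<ge> 1" using c a by linarith
  moreover have "(monom (1::nat) 0 + monom 1 k) * (monom 1 0 + monom 1 p1 + monom 1 p2) = (\<Sum>i<6. monom (1::nat) (i * k))"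
  proof -
    have s6: "(\<Sum>i<6. monom (1::nat) (i * k)) = monom 1 0 + monom 1 k + monom 1 (2*k) + monom 1 (3*k) + monom 1 (4*k) + monom 1 (5*k)"
      by (simp add: numeral_eq_Suc lessThan_Suc add_ac)
    have t: "k + 2*k = 3*k" "k + 4*k = 5*k" by simp_all
    show ?thesis unfolding prod6 c s6 t by (simp only: add_ac)
  qed
  ultimately show ?thesis by blast
qed

lemma rep2: fixes A :: "nat poly" assumes "poly A 1 = 2" "coeff A 0 \<noteq> 0" shows "\<exists>k. A = monom 1 0 + monom 1 k"
proof -
  have "0 \<in># msp A" using assms(2) count_msp by (metis count_greater_zero_iff neq0_conv)
  then have m: "msp A = add_mset 0 (msp A - {#0#})" by simp
  have "size (msp A - {#0#}) = 1" using assms(1) m size_msp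
    by (metis One_nat_def Suc_1 nat.inject size_add_mset)
  then obtain k where "msp A - {#0#} = {#k#}" using size_1_singleton_mset by blast
  then have "msp A = {#0, k#}" using m by simp
  then have "A = mp {#0,k#}" by (metis mp_msp)
  then show ?thesis by (auto simp: mp_simps)
qed

lemma rep3: fixes B :: "nat poly" assumes "poly B 1 = 3" "coeff B 0 \<noteq> 0"
  shows "\<exists>p1 p2. p1 \<le> p2 \<and> B = monom 1 0 + monom 1 p1 + monom 1 p2"
proof -
  have "0 \<in># msp B" using assms(2) count_msp by (metis count_greater_zero_iff neq0_conv)
  then have m: "msp B = add_mset 0 (msp B - {#0#})" by simp
  have "size (msp B - {#0#}) = Suc 1" using assms(1) m size_msp
    by (metis numeral_3_eq_3 One_nat_def nat.inject size_add_mset)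
  then obtain u N where uN: "msp B - {#0#} = add_mset u N"
    using size_eq_Suc_imp_eq_union by blast
  with \<open>size (msp B - {#0#}) = Suc 1\<close> have "size N = 1" by simp
  then obtain v where "N = {#v#}" using size_1_singleton_mset by blast
  then have mm: "msp B = {#0, u, v#}" using m uN by simp
  show ?thesis
  proof (cases "u \<le> v")
    case True
    have "B = mp {#0,u,v#}" using mm by (metis mp_msp)
    then have "B = monom 1 0 + monom 1 u + monom 1 v" by (simp add: mp_simps add_ac)
    then show ?thesis using True by blast
  next
    case False
    have "B = mp {#0,u,v#}" using mm by (metis mp_msp)
    then have "B = monom 1 0 + monom 1 v + monom 1 u" by (simp add: mp_simps add_ac)
    then show ?thesis using False by (intro exI[of _ v] exI[of _ u]) auto
  qed
qed

lemma key:
  fixes A B A' B' :: "nat poly"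
  assumes "A * B = A' * B'" "A \<noteq> A'" "poly A 1 = 2" "poly B 1 = 3" "poly A' 1 = 2" "poly B' 1 = 3"
    "coeff (A * B) 0 \<noteq> 0"
  shows "\<exists>b\<ge>1. A * B = (\<Sum>i<6. monom 1 (i * b))"
proof -
  have c: "coeff A 0 \<noteq> 0" "coeff B 0 \<noteq> 0" "coeff A' 0 \<noteq> 0" "coeff B' 0 \<noteq> 0"
    using assms(1,7) by (metis coeff_mult_0 mult_0 mult_0_right)+
  obtain k where k: "A = monom 1 0 + monom 1 k" using rep2 assms(3) c(1) by blast
  obtain m where m: "A' = monom 1 0 + monom 1 m" using rep2 assms(5) c(3) by blast
  obtain p1 p2 where p: "p1 \<le> p2" "B = monom 1 0 + monom 1 p1 + monom 1 p2" using rep3 assms(4) c(2) by blast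
  obtain q1 q2 where q: "q1 \<le> q2" "B' = monom 1 0 + monom 1 q1 + monom 1 q2" using rep3 assms(6) c(4) by blast
  have "k \<noteq> m" using assms(2) k m by auto
  then consider "k < m" | "m < k" by linarith
  then show ?thesis
  proof cases
    case 1
    have e: "(monom (1::nat) 0 + monom 1 k) * (monom 1 0 + monom 1 p1 + monom 1 p2)
     = (monom 1 0 + monom 1 m) * (monom 1 0 + monom 1 q1 + monom 1 q2)"
      using assms(1) unfolding k m p(2) q(2) .
    show ?thesis unfolding k p(2) by (rule key_lt[OF e 1 p(1) q(1)])
  next
    case 2
    have e: "(monom (1::nat) 0 + monom 1 m) * (monom 1 0 + monom 1 q1 + monom 1 q2)
     = (monom 1 0 + monom 1 k) * (monom 1 0 + monom 1 p1 + monom 1 p2)"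
      using assms(1) unfolding k m p(2) q(2) by simp
    show ?thesis unfolding assms(1) m q(2) by (rule key_lt[OF e 2 q(1) p(1)])
  qed
qed


lemma monom_1_eq: "monom (1::nat) j = 1 \<longleftrightarrow> j = 0"
proof
  assume "monom (1::nat) j = 1"
  then have "coeff (monom (1::nat) j) 0 = coeff 1 0" by simp
  then show "j = 0" by (simp add: coeff_monom split: if_splits)
qed (simp add: monom_0 one_pCons)

lemma irr_ne0: "N1_irreducible Q \<Longrightarrow> Q \<noteq> 0" unfolding N1_irreducible_def by simp

lemma irr_val1: assumes "N1_irreducible Q" "poly Q 1 = 1" shows "Q = monom 1 1"
proof -
  obtain j where j: "Q = monom 1 j" using poly1_one assms(2) by blast
  have "j \<noteq> 0" using assms(1) j monom_1_eq unfolding N1_irreducible_def by blast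
  then obtain j' where j': "j = Suc j'" by (cases j) auto
  have "Q = monom 1 1 * monom 1 j'" using j j' by (simp add: mult_monom)
  then have "monom (1::nat) 1 = 1 \<or> monom (1::nat) j' = 1" using assms(1) unfolding N1_irreducible_def by blast
  then have "j' = 0" using monom_1_eq by auto
  then show ?thesis using j j' by simp
qed

lemma pCons0_monom: "pCons 0 q = monom (1::nat) 1 * q"
proof (rule poly_eqI)
  fix n show "coeff (pCons 0 q) n = coeff (monom (1::nat) 1 * q) n"
    by (cases n) (auto simp: coeff_monom_mult coeff_pCons)
qed

lemma irr_coeff0: assumes "N1_irreducible Q" "poly Q 1 \<noteq> 1" shows "coeff Q 0 \<noteq> 0"
proof
  assume c: "coeff Q 0 = 0"
  obtain a q where Q: "Q = pCons a q" by (cases Q) auto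
  have "a = 0" using c Q by simp
  then have Q2: "Q = monom 1 1 * q" using Q pCons0_monom by simp
  then have "monom (1::nat) 1 = 1 \<or> q = 1" using assms(1) unfolding N1_irreducible_def by blast
  then have "q = 1" using monom_1_eq by auto
  then have "poly Q 1 = 1" using Q2 by (simp add: poly_monom)
  then show False using assms(2) by simp
qed

lemma prod_coeff0: "(\<forall>Q\<in>#N. coeff Q 0 \<noteq> 0) \<Longrightarrow> coeff (prod_mset N :: nat poly) 0 \<noteq> 0"
  by (induction N) (auto simp: coeff_mult_0)

lemma poly_prod1: "poly (prod_mset N :: nat poly) 1 = prod_mset (image_mset (\<lambda>Q. poly Q 1) N)"
  by (induction N) auto

lemma six_nat: assumes "a * b = (6::nat)" "2 \<le> a" "2 \<le> b" shows "(a = 2 \<and> b = 3) \<or> (a = 3 \<and> b = 2)"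
proof -
  have "2 * a \<le> 6" using assms by (metis mult.commute mult_le_mono2)
  then have "a = 2 \<or> a = 3" using assms(2) by linarith
  then show ?thesis using assms(1) by auto
qed

lemma six: assumes "\<forall>Q\<in>#N. poly Q 1 \<ge> (2::nat)" "poly (prod_mset N :: nat poly) 1 = 6"
  shows "(\<exists>R. N = {#R#}) \<or> (\<exists>A B. N = {#A,B#} \<and> poly A 1 = 2 \<and> poly B 1 = 3)"
proof (cases N)
  case empty then show ?thesis using assms by simp
next
  case (add Q1 N1)
  show ?thesis
  proof (cases N1)
    case empty then show ?thesis using add by simp
  next
    case (add Q2 N2)
    note N = \<open>N = add_mset Q1 N1\<close> add
    show ?thesis
    proof (cases N2)
      case empty
      have "poly Q1 1 * poly Q2 1 = 6" "2 \<le> poly Q1 1" "2 \<le> poly Q2 1" using assms N empty by auto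
      then have "(poly Q1 1 = 2 \<and> poly Q2 1 = 3) \<or> (poly Q1 1 = 3 \<and> poly Q2 1 = 2)" using six_nat by blast
      then show ?thesis
      proof
        assume "poly Q1 1 = 2 \<and> poly Q2 1 = 3" then show ?thesis using N empty by auto
      next
        assume "poly Q1 1 = 3 \<and> poly Q2 1 = 2"
        moreover have "N = {#Q2, Q1#}" using N empty by (simp add: add_mset_commute)
        ultimately show ?thesis by blast
      qed
    next
      case (add Q3 N3)
      define w where "w = poly (prod_mset N3) 1"
      have e: "poly Q1 1 * (poly Q2 1 * (poly Q3 1 * w)) = 6" "2 \<le> poly Q1 1" "2 \<le> poly Q2 1" "2 \<le> poly Q3 1"
        using assms N add unfolding w_def by auto
      then have "w \<noteq> 0" by (metis mult_0_right zero_neq_numeral)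
      then have "2 * (2 * (2 * 1)) \<le> poly Q1 1 * (poly Q2 1 * (poly Q3 1 * w))"
        using e(2-4) by (intro mult_le_mono) auto
      then show ?thesis using e(1) by simp
    qed
  qed
qed

lemma fact_struct:
  assumes "N1_factorisation M P" "poly P 1 = 6"
  shows "\<exists>r N. M = replicate_mset r (monom 1 1) + N \<and> P = monom 1 r * prod_mset N
     \<and> coeff (prod_mset N) 0 \<noteq> 0 \<and>
     ((\<exists>R. N = {#R#} \<and> N1_irreducible R) \<or>
      (\<exists>A B. N = {#A,B#} \<and> N1_irreducible A \<and> N1_irreducible B \<and> poly A 1 = 2 \<and> poly B 1 = 3))"
proof -
  have irr: "\<forall>Q\<in>#M. N1_irreducible Q" and pr: "prod_mset M = P"
    using assms(1) unfolding N1_factorisation_def by auto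
  define MX where "MX = filter_mset (\<lambda>Q. poly Q 1 = 1) M"
  define N where "N = filter_mset (\<lambda>Q. poly Q 1 \<noteq> 1) M"
  have MN: "M = MX + N" unfolding MX_def N_def by (rule multiset_partition)
  have "set_mset MX \<subseteq> {monom 1 1}" using irr irr_val1 unfolding MX_def by auto
  then have MX: "MX = replicate_mset (size MX) (monom 1 1)" by (rule set_mset_subset_singletonD)
  define r where "r = size MX"
  have "prod_mset MX = monom (1::nat) 1 ^ r" unfolding r_def by (metis MX prod_mset_replicate_mset)
  also have "\<dots> = monom 1 r" by (simp add: monom_power)
  finally have PX: "prod_mset MX = monom 1 r" .
  have P: "P = monom 1 r * prod_mset N"
    using pr MN PX by simp
  have irrN: "\<forall>Q\<in>#N. N1_irreducible Q" using irr unfolding N_def by auto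
  have ge2: "\<forall>Q\<in>#N. poly Q 1 \<ge> (2::nat)"
  proof
    fix Q assume "Q \<in># N"
    then have "N1_irreducible Q" "poly Q 1 \<noteq> 1" using irrN unfolding N_def by auto
    moreover have "poly Q 1 \<ge> 1" using poly1_pos irr_ne0 calculation(1) by blast
    ultimately show "poly Q 1 \<ge> 2" by linarith
  qed
  have c0: "coeff (prod_mset N) 0 \<noteq> 0"
  proof (rule prod_coeff0, rule ballI)
    fix Q assume q: "Q \<in># N"
    have "poly Q 1 \<noteq> 1" using ge2 q by fastforce
    then show "coeff Q 0 \<noteq> 0" using irr_coeff0 irrN q by blast
  qed
  have "poly (prod_mset N) 1 = 6" using assms(2) P by (simp add: poly_monom)
  then have "(\<exists>R. N = {#R#}) \<or> (\<exists>A B. N = {#A,B#} \<and> poly A 1 = 2 \<and> poly B 1 = 3)"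
    using six ge2 by blast
  then have "((\<exists>R. N = {#R#} \<and> N1_irreducible R) \<or>
      (\<exists>A B. N = {#A,B#} \<and> N1_irreducible A \<and> N1_irreducible B \<and> poly A 1 = 2 \<and> poly B 1 = 3))"
    using irrN by auto
  moreover have Mr: "M = replicate_mset r (monom 1 1) + N" unfolding r_def by (metis MN MX)
  ultimately show ?thesis using P c0 by blast
qed

lemma shift_eq:
  fixes R R' :: "nat poly"
  assumes "monom 1 r * R = monom 1 r' * R'" "coeff R 0 \<noteq> 0" "coeff R' 0 \<noteq> 0"
  shows "r = r' \<and> R = R'"
proof -
  have co: "\<And>x. coeff (monom 1 r * R) x = coeff (monom 1 r' * R') x" using assms(1) by simp
  have "r = r'"
  proof (rule ccontr)
    assume "r \<noteq> r'"
    then consider "r < r'" | "r' < r" by linarith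
    then show False
    proof cases
      case 1 then show ?thesis using co[of r] assms(2) by (simp add: coeff_monom_mult)
    next
      case 2 then show ?thesis using co[of r'] assms(3) by (simp add: coeff_monom_mult)
    qed
  qed
  moreover have "R = R'"
  proof (rule poly_eqI)
    fix x show "coeff R x = coeff R' x" using co[of "x + r"] \<open>r = r'\<close> by (simp add: coeff_monom_mult)
  qed
  ultimately show ?thesis by blast
qed

theorem mainTheorem9:
  fixes P :: "nat poly"
  assumes "poly P 1 = 6"
    and "\<not> N1_unique_factorisation P"
  shows "\<exists>a b::nat. b \<ge> 1 \<and> P = monom 1 a * (\<Sum>i<6. monom 1 (i * b))"
proof -
  obtain M M' where MM: "N1_factorisation M P" "N1_factorisation M' P" "M \<noteq> M'"
    using assms(2) unfolding N1_unique_factorisation_def by blast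
  obtain r N where rN: "M = replicate_mset r (monom 1 1) + N" "P = monom 1 r * prod_mset N"
     "coeff (prod_mset N) 0 \<noteq> 0"
     "(\<exists>R. N = {#R#} \<and> N1_irreducible R) \<or>
      (\<exists>A B. N = {#A,B#} \<and> N1_irreducible A \<and> N1_irreducible B \<and> poly A 1 = 2 \<and> poly B 1 = 3)"
    using fact_struct[OF MM(1) assms(1)] by blast
  obtain r' N' where rN': "M' = replicate_mset r' (monom 1 1) + N'" "P = monom 1 r' * prod_mset N'"
     "coeff (prod_mset N') 0 \<noteq> 0"
     "(\<exists>R. N' = {#R#} \<and> N1_irreducible R) \<or>
      (\<exists>A B. N' = {#A,B#} \<and> N1_irreducible A \<and> N1_irreducible B \<and> poly A 1 = 2 \<and> poly B 1 = 3)"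
    using fact_struct[OF MM(2) assms(1)] by blast
  have "r = r' \<and> prod_mset N = prod_mset N'"
    using shift_eq[of r "prod_mset N" r' "prod_mset N'"] rN rN' by simp
  then have rr: "r = r'" and RR: "prod_mset N = prod_mset N'" by auto
  have NN: "N \<noteq> N'" using MM(3) rN(1) rN'(1) rr by auto
  have irr1: "\<not> N1_irreducible (A * B)" if "N1_irreducible A" "N1_irreducible B" for A B
    using that unfolding N1_irreducible_def by auto
  show ?thesis
  proof (cases "\<exists>R. N = {#R#} \<and> N1_irreducible R")
    case True
    then obtain R where R: "N = {#R#}" "N1_irreducible R" by blast
    show ?thesis
    proof (cases "\<exists>R. N' = {#R#} \<and> N1_irreducible R")
      case True
      then obtain R' where "N' = {#R'#}" by blast
      then show ?thesis using RR R NN by simp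
    next
      case False
      then obtain A B where "N' = {#A,B#}" "N1_irreducible A" "N1_irreducible B" using rN'(4) by blast
      then show ?thesis using RR R irr1 by auto
    qed
  next
    case False
    then obtain A B where AB: "N = {#A,B#}" "N1_irreducible A" "N1_irreducible B" "poly A 1 = 2" "poly B 1 = 3"
      using rN(4) by blast
    show ?thesis
    proof (cases "\<exists>R. N' = {#R#} \<and> N1_irreducible R")
      case True
      then obtain R' where "N' = {#R'#}" "N1_irreducible R'" by blast
      then show ?thesis using RR AB irr1 by auto
    next
      case False
      then obtain A' B' where AB': "N' = {#A',B'#}" "N1_irreducible A'" "N1_irreducible B'" "poly A' 1 = 2" "poly B' 1 = 3"
        using rN'(4) by blast
      have e: "A * B = A' * B'" using RR AB(1) AB'(1) by (simp add: mult.commute)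
      have "A \<noteq> A'"
      proof
        assume "A = A'"
        then have "B = B'" using e cancel_nat_poly irr_ne0[OF AB(2)] by metis
        then show False using NN AB(1) AB'(1) \<open>A = A'\<close> by simp
      qed
      have c: "coeff (A * B) 0 \<noteq> 0" using rN(3) AB(1) by (simp add: mult.commute)
      obtain b where "b \<ge> 1" "A * B = (\<Sum>i<6. monom 1 (i * b))"
        using key[OF e \<open>A \<noteq> A'\<close> AB(4) AB(5) AB'(4) AB'(5) c] by blast
      then show ?thesis using rN(2) AB(1) by (intro exI[of _ r] exI[of _ b]) (simp add: mult.commute)
    qed
  qed
qed

end
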